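(* Let $\beta\in(0,\infty)$ and, for each $N\ge1$, let $K=K_N$ be a positive integer with $K_N/N\to\beta$. Let $\boldsymbol{S}\in\mathbb{R}^{N\times K}$ be a random time-hopping matrix with $N_{\mathsf s}=1$: its columns are independent, $\boldsymbol{s}_k=\epsilon_k\boldsymbol{e}_{\pi_k}$ with $\pi_k$ uniform on $\{1,\dots,N\}$ and $\epsilon_k$ uniform on $\{-1,+1\}$, all independent. Then, as $N\to\infty$, \[ r_N:=\frac{1}{N}\operatorname{rank}\boldsymbol{S}\ \xrightarrow{p}\ 1-e^{-\beta}. \]
   Context: $\boldsymbol{e}_i$ denotes the $i$th standard basis vector of $\mathbb{R}^N$; $\xrightarrow{p}$ denotes convergence in probability. *)

theory Defs
  imports "HOL-Probability.Probability" "Jordan_Normal_Form.DL_Rank"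
begin

text \<open>Time-hopping matrix with one nonzero entry per column: column k is
  eps k times the standard basis vector indexed by pi k (indices 0-based).\<close>
definition th_matrix :: "nat \<Rightarrow> nat \<Rightarrow> (nat \<Rightarrow> nat) \<Rightarrow> (nat \<Rightarrow> real) \<Rightarrow> real mat" where
  "th_matrix N K p eps = mat N K (\<lambda>(i, k). if i = p k then eps k else 0)"

definition th_law :: "nat \<Rightarrow> nat \<Rightarrow> (nat \<Rightarrow> nat \<times> real) pmf" where
  "th_law N K = Pi_pmf {..<K} (0, 1)
     (\<lambda>k. pair_pmf (pmf_of_set {..<N}) (pmf_of_set {-1, 1}))"

definition rank_ratio :: "nat \<Rightarrow> nat \<Rightarrow> (nat \<Rightarrow> nat \<times> real) \<Rightarrow> real" where
  "rank_ratio N K w =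
     real (vec_space.rank N (th_matrix N K (\<lambda>k. fst (w k)) (\<lambda>k. snd (w k)))) / real N"

end

theory Submission imports Defs "HOL-Real_Asymp.Real_Asymp" begin


definition BB :: "nat \<Rightarrow> nat \<Rightarrow> (nat \<Rightarrow> nat \<times> real) set" where
  "BB K i = Pi {..<K} (\<lambda>k. {z. fst z \<noteq> i})"

definition YY :: "nat \<Rightarrow> nat \<Rightarrow> (nat \<Rightarrow> nat \<times> real) \<Rightarrow> real" where
  "YY N K w = (\<Sum>i<N. indicator (BB K i) w)"

lemma law_set:
  assumes "N \<ge> 1" "w \<in> set_pmf (th_law N K)" "k < K"
  shows "fst (w k) < N \<and> snd (w k) \<in> {-1, 1}"
proof -
  have "0 \<in> {..<N}" using assms(1) by simp
  then have "{..<N} \<noteq> {}" by blast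
  then show ?thesis using assms(2,3)
    by (auto simp: th_law_def set_Pi_pmf PiE_dflt_def set_pair_pmf)
qed

lemma law_finite: assumes "N \<ge> 1" shows "finite (set_pmf (th_law N K))"
proof -
  have "0 \<in> {..<N}" using assms(1) by simp
  then have ne: "{..<N} \<noteq> {}" by blast
  have "set_pmf (th_law N K) = PiE_dflt {..<K} (0, 1)
     (set_pmf \<circ> (\<lambda>k. pair_pmf (pmf_of_set {..<N}) (pmf_of_set {-1, 1::real})))"
    unfolding th_law_def by (rule set_Pi_pmf) simp
  also have "finite \<dots>"
    using ne by (intro finite_PiE_dflt) (auto simp: set_pair_pmf)
  finally show ?thesis .
qed

lemma prob_fst:
  fixes N :: nat
  assumes "N \<ge> 1"
  shows "measure_pmf.prob (pair_pmf (pmf_of_set {..<N}) (pmf_of_set {-1, 1::real})) {z. fst z \<in> C}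
     = card ({..<N} \<inter> C) / real N"
proof -
  have e: "{z. fst z \<in> C} = fst -` C" by auto
  have "measure_pmf.prob (pair_pmf (pmf_of_set {..<N}) (pmf_of_set {-1, 1::real})) {z. fst z \<in> C}
     = measure_pmf.prob (map_pmf fst (pair_pmf (pmf_of_set {..<N}) (pmf_of_set {-1, 1::real}))) C"
    unfolding e by (rule measure_map_pmf[symmetric])
  also have "\<dots> = measure_pmf.prob (pmf_of_set {..<N}) C" by (simp add: map_fst_pair_pmf)
  also have "\<dots> = card ({..<N} \<inter> C) / real N" proof -
    have "0 \<in> {..<N}" using assms(1) by simp
    then have ne: "{..<N} \<noteq> {}" by blast
    show ?thesis using measure_pmf_of_set[OF ne, of C] by simp
  qed
  finally show ?thesis .
qed

lemma probB1:
  assumes "N \<ge> 1" "i < N"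
  shows "measure_pmf.prob (th_law N K) (BB K i) = ((real N - 1) / real N) ^ K"
proof -
  have "measure_pmf.prob (th_law N K) (BB K i) =
     (\<Prod>k<K. measure_pmf.prob (pair_pmf (pmf_of_set {..<N}) (pmf_of_set {-1, 1::real})) {z. fst z \<in> - {i}})"
    unfolding th_law_def BB_def by (subst measure_Pi_pmf_Pi) auto
  also have "\<dots> = (\<Prod>k<K. (real N - 1) / real N)"
  proof -
    have "{..<N} \<inter> - {i} = {..<N} - {i}" by auto
    then have "card ({..<N} \<inter> - {i}) = N - 1" using assms by simp
    then show ?thesis using assms by (subst prob_fst[OF assms(1)]) (simp add: of_nat_diff)
  qed
  finally show ?thesis by simp
qed

lemma probB2:
  assumes "N \<ge> 1" "i < N" "j < N" "i \<noteq> j"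
  shows "measure_pmf.prob (th_law N K) (BB K i \<inter> BB K j) = ((real N - 2) / real N) ^ K"
proof -
  have "BB K i \<inter> BB K j = Pi {..<K} (\<lambda>k. {z. fst z \<in> - {i, j}})"
    unfolding BB_def by auto
  then have "measure_pmf.prob (th_law N K) (BB K i \<inter> BB K j) =
     (\<Prod>k<K. measure_pmf.prob (pair_pmf (pmf_of_set {..<N}) (pmf_of_set {-1, 1::real})) {z. fst z \<in> - {i, j}})"
    unfolding th_law_def by (simp only:) (subst measure_Pi_pmf_Pi, auto)
  also have "\<dots> = (\<Prod>k<K. (real N - 2) / real N)"
  proof -
    have "{..<N} \<inter> - {i, j} = {..<N} - {i, j}" by auto
    then have "card ({..<N} \<inter> - {i, j}) = N - 2" using assms by (simp add: card_Diff_subset)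
    moreover have "N \<ge> 2" using assms by auto
    ultimately show ?thesis using assms by (subst prob_fst[OF assms(1)]) (simp add: of_nat_diff)
  qed
  finally show ?thesis by simp
qed



lemma cov_eq:
  fixes N K :: nat
  assumes "N \<ge> 1" "i < N" "j < N"
  defines "q \<equiv> ((real N - 1) / real N) ^ K"
  shows "measure_pmf.expectation (th_law N K)
     (\<lambda>w. (indicator (BB K i) w - q) * (indicator (BB K j) w - q)) =
     measure_pmf.prob (th_law N K) (BB K i \<inter> BB K j) - q\<^sup>2"
proof -
  let ?M = "th_law N K"
  have int: "\<And>f::_ \<Rightarrow> real. integrable ?M f" by (rule integrable_measure_pmf_finite[OF law_finite[OF assms(1)]])
  have pw: "\<And>w. (indicator (BB K i) w - q) * (indicator (BB K j) w - q) =
     (indicator (BB K i \<inter> BB K j) w - q * indicator (BB K i) w) - q * indicator (BB K j) w + q\<^sup>2"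
    by (simp add: indicator_inter_arith algebra_simps power2_eq_square)
  have "measure_pmf.expectation ?M
     (\<lambda>w. (indicator (BB K i) w - q) * (indicator (BB K j) w - q)) =
     measure_pmf.expectation ?M (\<lambda>w. (indicator (BB K i \<inter> BB K j) w - q * indicator (BB K i) w) - q * indicator (BB K j) w + q\<^sup>2)"
    by (simp only: pw)
  also have "\<dots> = measure_pmf.prob ?M (BB K i \<inter> BB K j) - q * q - q * q + q\<^sup>2"
    using int by (simp add: probB1[OF assms(1,2), of K, folded q_def] probB1[OF assms(1,3), of K, folded q_def])
  finally show ?thesis by (simp add: power2_eq_square)
qed

lemma var_bound:
  fixes N K :: nat
  assumes "N \<ge> 1"
  shows "measure_pmf.expectation (th_law N K) (\<lambda>w. (YY N K w - real N * ((real N - 1) / real N) ^ K)\<^sup>2) \<le> N"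
proof -
  define q where "q = ((real N - 1) / real N) ^ K"
  let ?M = "th_law N K"
  let ?I = "\<lambda>i w. indicator (BB K i) w :: real"
  have int: "\<And>f::_ \<Rightarrow> real. integrable ?M f" by (rule integrable_measure_pmf_finite[OF law_finite[OF assms(1)]])
  have q0: "0 \<le> q" and q1: "q \<le> 1" using assms(1) unfolding q_def
    by (auto intro!: power_le_one)
  have pw: "(YY N K w - N * q)\<^sup>2 = (\<Sum>i<N. \<Sum>j<N. (?I i w - q) * (?I j w - q))" for w
  proof -
    have "YY N K w - N * q = (\<Sum>i<N. (?I i w - q))"
      unfolding YY_def by (simp add: sum_subtractf)
    then show ?thesis by (simp add: power2_eq_square sum_product)
  qed
  have "measure_pmf.expectation ?M (\<lambda>w. (YY N K w - N * q)\<^sup>2) =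
    (\<Sum>i<N. \<Sum>j<N. measure_pmf.expectation ?M (\<lambda>w. (?I i w - q) * (?I j w - q)))"
    by (simp only: pw, subst Bochner_Integration.integral_sum, rule int,
        subst Bochner_Integration.integral_sum, rule int, rule refl)
  also have "\<dots> \<le> (\<Sum>i<N. \<Sum>j<N. (if j = i then 1 else 0))"
  proof (intro sum_mono)
    fix i j assume i: "i \<in> {..<N}" and j: "j \<in> {..<N}"
    show "measure_pmf.expectation ?M (\<lambda>w. (?I i w - q) * (?I j w - q)) \<le> (if j = i then 1 else 0)"
    proof (cases "j = i")
      case True
      have "measure_pmf.expectation ?M (\<lambda>w. (?I i w - q) * (?I j w - q)) = q - q\<^sup>2"
        using cov_eq[of N i j K] i j assms(1) probB1[of N i K] True by (simp add: q_def)
      moreover have "0 \<le> q\<^sup>2" by simp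
      ultimately have "q - q\<^sup>2 \<le> 1" using q1 by linarith
      with \<open>measure_pmf.expectation ?M (\<lambda>w. (?I i w - q) * (?I j w - q)) = q - q\<^sup>2\<close>
      show ?thesis using True by simp
    next
      case False
      have N2: "N \<ge> 2" using i j False by auto
      have a: "0 \<le> (real N - 2) / real N" using N2 by simp
      have b: "(real N - 2) / real N \<le> ((real N - 1) / real N)\<^sup>2"
        using N2 by (simp add: field_simps power2_eq_square)
      have "((real N - 2) / real N) ^ K \<le> (((real N - 1) / real N)\<^sup>2) ^ K"
        by (rule power_mono[OF b a])
      also have "\<dots> = q\<^sup>2" unfolding q_def by (simp add: power_mult[symmetric] mult.commute)
      finally show ?thesis using cov_eq[of N i j K] probB2[of N i j K] i j assms(1) False
        by (simp add: q_def)
    qed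
  qed
  also have "\<dots> = N" by simp
  finally show ?thesis unfolding q_def .
qed



lemma (in vec_space) rank_onehot:
  fixes p :: "nat \<Rightarrow> nat" and e :: "nat \<Rightarrow> 'a"
  assumes pn: "\<forall>k<K. p k < n" and e0: "\<forall>k<K. e k \<noteq> 0"
  shows "rank (mat n K (\<lambda>(i,k). if i = p k then e k else 0)) = card (p ` {..<K})"
proof -
  define A where "A = mat n K (\<lambda>(i,k). if i = p k then e k else 0)"
  have Ac: "A \<in> carrier_mat n K" unfolding A_def by simp
  have colA: "\<And>k j. k < K \<Longrightarrow> j < n \<Longrightarrow> col A k $ j = (if j = p k then e k else 0)"
    unfolding A_def by simp
  have dcol: "\<And>k. k < K \<Longrightarrow> col A k \<in> carrier_vec n" unfolding A_def by simp
  have setc: "set (cols A) = col A ` {..<K}"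
    unfolding cols_def A_def by auto
  define P where "P = p ` {..<K}"
  define r where "r i = (LEAST k. k < K \<and> p k = i)" for i
  have r: "r i < K \<and> p (r i) = i" if "i \<in> P" for i
  proof -
    from that obtain k where "k < K \<and> p k = i" unfolding P_def by auto
    then show ?thesis unfolding r_def by (rule LeastI)
  qed
  define S where "S = (\<lambda>i. col A (r i)) ` P"
  have finP: "finite P" unfolding P_def by simp
  have Pn: "\<And>i. i \<in> P \<Longrightarrow> i < n" unfolding P_def using pn by auto
  have inj: "inj_on (\<lambda>i. col A (r i)) P"
  proof (rule inj_onI)
    fix i i' assume i: "i \<in> P" and i': "i' \<in> P" and eq: "col A (r i) = col A (r i')"
    have "col A (r i) $ i = e (r i)" using colA[of "r i" i] r[OF i] Pn[OF i] by simp
    moreover have "col A (r i') $ i = (if i = i' then e (r i') else 0)"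
      using colA[of "r i'" i] r[OF i'] Pn[OF i] by simp
    ultimately have "e (r i) = (if i = i' then e (r i') else 0)" using eq by simp
    then show "i = i'" using e0 r[OF i] by (cases "i = i'") simp_all
  qed
  have cardS: "card S = card P" unfolding S_def using card_image[OF inj] .
  have Ssub: "S \<subseteq> set (cols A)" unfolding S_def setc using r by auto
  have Scar: "S \<subseteq> carrier_vec n" unfolding S_def using r dcol by auto
  have finS: "finite S" unfolding S_def using finP by simp
  have indS: "lin_indpt S"
  proof
    assume "lin_dep S"
    from finite_lin_dep[OF finS this] Scar obtain a v where
      lc: "lincomb a S = 0\<^sub>v n" and v: "v \<in> S" and av: "a v \<noteq> 0" by auto
    from v obtain i where i: "i \<in> P" and vi: "v = col A (r i)" unfolding S_def by auto
    have "lincomb a S $ i = (\<Sum>x\<in>S. a x * x $ i)"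
      using lincomb_index[OF Pn[OF i] Scar] .
    also have "\<dots> = a v * v $ i"
    proof (rule sum.remove[OF finS v, THEN trans])
      have "\<forall>x\<in>S - {v}. a x * x $ i = 0"
      proof
        fix x assume x: "x \<in> S - {v}"
        then obtain i' where i': "i' \<in> P" and xi: "x = col A (r i')" unfolding S_def by auto
        with x vi have "i' \<noteq> i" by auto
        then show "a x * x $ i = 0" using colA[of "r i'" i] r[OF i'] Pn[OF i] xi by simp
      qed
      then have "(\<Sum>x\<in>S - {v}. a x * x $ i) = 0" by (intro sum.neutral) blast
      then show "a v * v $ i + (\<Sum>x\<in>S - {v}. a x * x $ i) = a v * v $ i" by simp
    qed
    also have "\<dots> = a v * e (r i)" using colA[of "r i" i] r[OF i] Pn[OF i] vi by simp
    finally have "a v * e (r i) = 0" using lc Pn[OF i] by simp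
    then show False using av e0 r[OF i] by simp
  qed
  have maxS: "maximal S (\<lambda>T. T \<subseteq> set (cols A) \<and> lin_indpt T)"
    unfolding maximal_def
  proof (intro conjI allI impI)
    show "S \<subseteq> set (cols A)" by (rule Ssub)
    show "lin_indpt S" by (rule indS)
    fix B assume B: "S \<subseteq> B \<and> B \<subseteq> set (cols A) \<and> lin_indpt B"
    show "B = S"
    proof (rule ccontr)
      assume "B \<noteq> S"
      with B obtain x where xB: "x \<in> B" and xS: "x \<notin> S" by auto
      with B setc obtain k where k: "k < K" and xk: "x = col A k" by auto
      define i where "i = p k"
      have iP: "i \<in> P" unfolding i_def P_def using k by auto
      define u where "u = col A (r i)"
      have uS: "u \<in> S" unfolding u_def S_def using iP by auto
      have ux: "u \<noteq> x" using uS xS by auto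
      define c where "c = e k / e (r i)"
      define a where "a y = (if y = u then c else -1)" for y
      have lc: "lincomb a {u, x} = 0\<^sub>v n"
      proof (rule eq_vecI)
        have car: "{u, x} \<subseteq> carrier_vec n" using dcol k r[OF iP] unfolding u_def xk by auto
        show "dim_vec (lincomb a {u, x}) = dim_vec (0\<^sub>v n)"
          using lincomb_dim[OF _ car] by simp
        fix j assume "j < dim_vec (0\<^sub>v n)"
        then have j: "j < n" by simp
        have "lincomb a {u, x} $ j = a u * u $ j + a x * x $ j"
          using lincomb_index[OF j car] ux by simp
        also have "\<dots> = 0"
          using colA[of "r i" j] colA[of k j] r[OF iP] k j e0 ux
          unfolding a_def c_def u_def xk i_def by auto
        finally show "lincomb a {u, x} $ j = 0\<^sub>v n $ j" using j by simp
      qed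
      have "lin_dep B"
        by (rule lin_dep_crit[where A="{u, x}" and S=B and a=a and v=x]) (use xB uS B lc ux in \<open>auto simp: a_def\<close>)
      with B show False by simp
    qed
  qed
  show ?thesis unfolding A_def[symmetric]
    using rank_card_indpt[OF Ac maxS] cardS P_def by simp
qed


lemma rank_eq:
  assumes N1: "N \<ge> 1" and w: "w \<in> set_pmf (th_law N K)"
  shows "rank_ratio N K w = 1 - YY N K w / real N"
proof -
  let ?p = "\<lambda>k. fst (w k)" and ?e = "\<lambda>k. snd (w k)"
  have pn: "\<forall>k<K. ?p k < N" and e0: "\<forall>k<K. ?e k \<noteq> 0"
    using law_set[OF N1 w] by force+
  have rk: "vec_space.rank N (th_matrix N K ?p ?e) = card (?p ` {..<K})"
    unfolding th_matrix_def by (rule vec_space.rank_onehot[OF pn e0])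
  define Occ where "Occ = ?p ` {..<K}"
  have Osub: "Occ \<subseteq> {..<N}" using pn unfolding Occ_def by auto
  have BBi: "w \<in> BB K i \<longleftrightarrow> i \<notin> Occ" for i
    unfolding BB_def Occ_def by auto
  have "YY N K w = (\<Sum>i\<in>{i\<in>{..<N}. w \<in> BB K i}. 1)"
    unfolding YY_def by (simp add: sum.inter_filter indicator_def) (rule arg_cong[where f=card], auto)
  also have "\<dots> = real (card {i\<in>{..<N}. w \<in> BB K i})" by simp
  also have "{i\<in>{..<N}. w \<in> BB K i} = {..<N} - Occ" using BBi by auto
  also have "card ({..<N} - Occ) = N - card Occ" using Osub by (simp add: card_Diff_subset finite_subset)
  finally have Y: "YY N K w = real (N - card Occ)" .
  have "card Occ \<le> N" using Osub card_mono[of "{..<N}" Occ] by simp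
  then have "YY N K w = real N - real (card Occ)" using Y by (simp add: of_nat_diff)
  then show ?thesis unfolding rank_ratio_def rk Occ_def[symmetric] using N1
    by (simp add: field_simps)
qed

lemma chebyshev_Y:
  fixes N K :: nat and d :: real
  assumes N1: "N \<ge> 1" and d: "d > 0"
  defines "q \<equiv> ((real N - 1) / real N) ^ K"
  shows "measure_pmf.prob (th_law N K) {w. (d * N)\<^sup>2 \<le> (YY N K w - real N * q)\<^sup>2} \<le> 1 / (d\<^sup>2 * N)"
proof -
  let ?M = "th_law N K"
  have int: "\<And>f::_ \<Rightarrow> real. integrable ?M f" by (rule integrable_measure_pmf_finite[OF law_finite[OF N1]])
  have pos: "0 < (d * N)\<^sup>2" using d N1 by simp
  have "measure_pmf.prob ?M {w. (d * N)\<^sup>2 \<le> (YY N K w - real N * q)\<^sup>2} \<le>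
     measure_pmf.expectation ?M (\<lambda>w. (YY N K w - real N * q)\<^sup>2) / (d * N)\<^sup>2"
    using integral_Markov_inequality_measure[OF int _ _ pos, of UNIV] by simp
  also have "\<dots> \<le> N / (d * N)\<^sup>2"
    using var_bound[OF N1, of K] pos unfolding q_def by (intro divide_right_mono) auto
  also have "\<dots> = 1 / (d\<^sup>2 * N)" using N1 by (simp add: power2_eq_square field_simps)
  finally show ?thesis .
qed

lemma lim_q:
  fixes \<beta> :: real and K :: "nat \<Rightarrow> nat"
  assumes "(\<lambda>N. real (K N) / real N) \<longlonglongrightarrow> \<beta>"
  shows "(\<lambda>N. ((real N - 1) / real N) ^ K N) \<longlonglongrightarrow> exp (- \<beta>)"
proof -
  have l1: "(\<lambda>N::nat. real N * ln (1 - 1 / real N)) \<longlonglongrightarrow> -1" by real_asymp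
  have "(\<lambda>N. exp ((real (K N) / real N) * (real N * ln (1 - 1 / real N)))) \<longlonglongrightarrow> exp (\<beta> * -1)"
    by (intro tendsto_exp tendsto_mult assms l1)
  moreover have "eventually (\<lambda>N. exp ((real (K N) / real N) * (real N * ln (1 - 1 / real N)))
      = ((real N - 1) / real N) ^ K N) sequentially"
    using eventually_ge_at_top[of "2::nat"]
  proof eventually_elim
    case (elim N)
    then have x: "(real N - 1) / real N = 1 - 1 / real N" "0 < 1 - 1 / real N"
      by (auto simp: field_simps)
    have "((real N - 1) / real N) ^ K N = exp (ln ((1 - 1 / real N) ^ K N))"
      using x by simp
    also have "\<dots> = exp (real (K N) * ln (1 - 1 / real N))"
      using x by (simp add: ln_realpow)
    also have "\<dots> = exp ((real (K N) / real N) * (real N * ln (1 - 1 / real N)))"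
      using elim by simp
    finally show ?case ..
  qed
  ultimately show ?thesis by (simp add: Lim_transform_eventually)
qed

theorem corollary2:
  fixes \<beta> :: real and K :: "nat \<Rightarrow> nat"
  assumes "\<beta> > 0"
    and "\<And>N. N \<ge> 1 \<Longrightarrow> K N \<ge> 1"
    and "(\<lambda>N. real (K N) / real N) \<longlonglongrightarrow> \<beta>"
  shows "\<forall>e>0. (\<lambda>N. measure_pmf.prob (th_law N (K N))
            {w. \<bar>rank_ratio N (K N) w - (1 - exp (- \<beta>))\<bar> > e}) \<longlonglongrightarrow> 0"
proof (intro allI impI)
  fix e :: real assume e: "e > 0"
  define q where "q N = ((real N - 1) / real N) ^ K N" for N
  have lq: "q \<longlonglongrightarrow> exp (- \<beta>)" unfolding q_def by (rule lim_q[OF assms(3)])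
  have evq: "eventually (\<lambda>N. dist (q N) (exp (- \<beta>)) < e / 2) sequentially"
  proof -
    have "e / 2 > 0" using e by simp
    from lq[unfolded tendsto_iff, rule_format, OF this] show ?thesis .
  qed
  have g0: "(\<lambda>N. 1 / ((e / 2)\<^sup>2 * real N)) \<longlonglongrightarrow> 0"
    using e by real_asymp
  show "(\<lambda>N. measure_pmf.prob (th_law N (K N))
            {w. \<bar>rank_ratio N (K N) w - (1 - exp (- \<beta>))\<bar> > e}) \<longlonglongrightarrow> 0"
  proof (rule tendsto_sandwich[OF _ _ tendsto_const g0])
    show "eventually (\<lambda>N. 0 \<le> measure_pmf.prob (th_law N (K N))
            {w. \<bar>rank_ratio N (K N) w - (1 - exp (- \<beta>))\<bar> > e}) sequentially"
      by simp
    show "eventually (\<lambda>N. measure_pmf.prob (th_law N (K N))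
            {w. \<bar>rank_ratio N (K N) w - (1 - exp (- \<beta>))\<bar> > e} \<le> 1 / ((e / 2)\<^sup>2 * real N)) sequentially"
      using evq eventually_ge_at_top[of "1::nat"]
    proof eventually_elim
      case (elim N)
      let ?M = "th_law N (K N)"
      let ?A = "{w. \<bar>rank_ratio N (K N) w - (1 - exp (- \<beta>))\<bar> > e}"
      let ?B = "{w. (e / 2 * N)\<^sup>2 \<le> (YY N (K N) w - real N * q N)\<^sup>2}"
      have sub: "?A \<inter> set_pmf ?M \<subseteq> ?B"
      proof
        fix w assume "w \<in> ?A \<inter> set_pmf ?M"
        then have wA: "\<bar>rank_ratio N (K N) w - (1 - exp (- \<beta>))\<bar> > e" and ws: "w \<in> set_pmf ?M" by auto
        have "rank_ratio N (K N) w = 1 - YY N (K N) w / real N" by (rule rank_eq[OF elim(2) ws])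
        with wA have "\<bar>exp (- \<beta>) - YY N (K N) w / real N\<bar> > e" by simp
        moreover have "\<bar>q N - exp (- \<beta>)\<bar> < e / 2" using elim(1) by (simp add: dist_real_def)
        ultimately have "\<bar>YY N (K N) w / real N - q N\<bar> > e / 2" by linarith
        then have "real N * (e / 2) < real N * \<bar>YY N (K N) w / real N - q N\<bar>"
          using elim(2) by simp
        also have "real N * \<bar>YY N (K N) w / real N - q N\<bar> = \<bar>YY N (K N) w - real N * q N\<bar>"
          using elim(2) by (simp add: abs_mult[symmetric] field_simps)
        finally have "e / 2 * N < \<bar>YY N (K N) w - real N * q N\<bar>" by (simp add: mult.commute)
        then have "(e / 2 * N)\<^sup>2 \<le> (\<bar>YY N (K N) w - real N * q N\<bar>)\<^sup>2"
          using e by (intro power_mono) auto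
        then show "w \<in> ?B" by simp
      qed
      have "measure_pmf.prob ?M ?A = measure_pmf.prob ?M (?A \<inter> set_pmf ?M)"
        by (simp add: measure_Int_set_pmf)
      also have "\<dots> \<le> measure_pmf.prob ?M ?B"
        by (rule measure_pmf.finite_measure_mono[OF sub]) simp
      also have "\<dots> \<le> 1 / ((e / 2)\<^sup>2 * real N)"
        unfolding q_def using chebyshev_Y[OF elim(2), of "e / 2" "K N"] e by simp
      finally show ?case .
    qed
  qed
qed

end
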